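(* Let $\mathcal H=\mathbb C^5$ with orthonormal basis $\{|i\rangle\}_{i=0}^4$, $|\pm\rangle=(|0\rangle\pm|1\rangle)/\sqrt2$, and $a\in(0,1)$. Define $E_1=|2\rangle\langle2|+a|0\rangle\langle0|+(1-a)|+\rangle\langle+|$, $E_2=|3\rangle\langle3|+a|1\rangle\langle1|$, $E_3=|4\rangle\langle4|+(1-a)|-\rangle\langle-|$. Then $\{E_1,E_2,E_3\}$ is a non-commutative POVM (e.g. $E_2E_3\neq E_3E_2$), yet each $E_k$ is a fixed point of the Heisenberg-picture entanglement breaking channel $\Lambda^*(A)=\sum_{z=1}^3\mathrm{tr}[A\,|z+1\rangle\langle z+1|]E_z$; hence $\{E_k\}$ does not allow for a proof of contextuality of quantum theory.
   Context: A set of observables $\mathcal A$ does not allow for a proof of contextuality of quantum theory if there exist a POVM $\{G_\lambda\}$ and states $\{\sigma_\lambda\}$ (finite index set) with $A_k=\sum_\lambda\mathrm{tr}[\sigma_\lambda A_k]G_\lambda$ for all $\{A_k\}\in\mathcal A$ and all $k$. *)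

theory Defs
  imports "HOL-Analysis.Analysis" "HOL-Library.Numeral_Type" "HOL-Library.Complex_Order"
begin

text \<open>Finite-dimensional quantum mechanics on C^n, with the index type 'n (finite)
  labelling an orthonormal basis. Matrices are complex^'n^'n (row-major, A$i$j).\<close>

definition ket :: "'n::finite \<Rightarrow> complex^'n" where
  "ket i = (\<chi> j. if j = i then 1 else 0)"

definition proj :: "complex^'n::finite \<Rightarrow> complex^'n^'n" where
  "proj v = (\<chi> i j. v$i * cnj (v$j))"

definition cscale :: "complex \<Rightarrow> complex^'n^'m \<Rightarrow> complex^'n^'m" where
  "cscale c M = (\<chi> i j. c * M$i$j)"

text \<open>Positive semidefinite: <v|A|v> is real and nonnegative for all v
  (ordering of complex numbers from HOL-Library.Complex_Order).\<close>
definition psd :: "complex^'n::finite^'n \<Rightarrow> bool" where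
  "psd A \<longleftrightarrow> (\<forall>v::complex^'n. 0 \<le> (\<Sum>i\<in>UNIV. \<Sum>j\<in>UNIV. cnj (v$i) * A$i$j * v$j))"

definition povm :: "'k set \<Rightarrow> ('k \<Rightarrow> complex^'n::finite^'n) \<Rightarrow> bool" where
  "povm K E \<longleftrightarrow> finite K \<and> (\<forall>k\<in>K. psd (E k)) \<and> (\<Sum>k\<in>K. E k) = mat 1"

definition density :: "complex^'n::finite^'n \<Rightarrow> bool" where
  "density \<sigma> \<longleftrightarrow> psd \<sigma> \<and> trace \<sigma> = 1"

definition no_contextuality_proof ::
    "('k set \<times> ('k \<Rightarrow> complex^'n::finite^'n)) set \<Rightarrow> bool" where
  "no_contextuality_proof \<A> \<longleftrightarrow>
     (\<exists>(L::nat set) G \<sigma>. finite L \<and> povm L G \<and> (\<forall>l\<in>L. density (\<sigma> l)) \<and>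
        (\<forall>(K, A)\<in>\<A>. \<forall>k\<in>K. A k = (\<Sum>l\<in>L. cscale (trace (\<sigma> l ** A k)) (G l))))"

end

theory Submission
  imports Defs
begin
lemma exhaust_5: fixes x :: 5 shows "x = 0 \<or> x = 1 \<or> x = 2 \<or> x = 3 \<or> x = 4"
proof (induct x)
  case (of_int z)
  then have "z = 0 \<or> z = 1 \<or> z = 2 \<or> z = 3 \<or> z = 4" by fastforce
  then show ?case by auto
qed
lemma UNIV_5: "(UNIV::5 set) = {0,1,2,3,4}" using exhaust_5 by auto
lemma sum_5: "sum f (UNIV::5 set) = f 0 + f 1 + f 2 + f 3 + f 4"
  unfolding UNIV_5 by (simp add: ac_simps)
lemma forall_5: "(\<forall>i::5. P i) \<longleftrightarrow> P 0 \<and> P 1 \<and> P 2 \<and> P 3 \<and> P 4"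
  by (metis exhaust_5)
lemma projp: "proj ((1 / sqrt 2) *\<^sub>R (ket (0::5) + ket 1)) = (\<chi> i j. if (i=0 \<or> i=1) \<and> (j=0\<or>j=1) then 1/2 else 0)"
  unfolding proj_def ket_def
  by (simp add: vec_eq_iff forall_5) (simp add: scaleR_conv_of_real)
lemma projm: "proj ((1 / sqrt 2) *\<^sub>R (ket (0::5) - ket 1)) = (\<chi> i j. if (i=0 \<or> i=1) \<and> (j=0\<or>j=1) then (if i = j then 1/2 else -1/2) else 0)"
  unfolding proj_def ket_def
  by (simp add: vec_eq_iff forall_5) (simp add: scaleR_conv_of_real)
lemma projk: "proj (ket k) = (\<chi> i j. if i = k \<and> j = k then 1 else 0)"
  unfolding proj_def ket_def by (simp add: vec_eq_iff)

lemma psd_add: "psd A \<Longrightarrow> psd B \<Longrightarrow> psd (A + B)"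
  unfolding psd_def by (simp add: distrib_left distrib_right sum.distrib add_nonneg_nonneg)
lemma psd_scaleR: "psd A \<Longrightarrow> 0 \<le> r \<Longrightarrow> psd (r *\<^sub>R A)"
proof -
  assume A: "psd A" and r: "0 \<le> r"
  show ?thesis unfolding psd_def
  proof
    fix v :: "complex^'a"
    have "(\<Sum>i\<in>UNIV. \<Sum>j\<in>UNIV. cnj (v$i) * (r *\<^sub>R A)$i$j * v$j)
       = of_real r * (\<Sum>i\<in>UNIV. \<Sum>j\<in>UNIV. cnj (v$i) * A$i$j * v$j)"
      unfolding vector_scaleR_component by (simp add: sum_distrib_left scaleR_conv_of_real mult_ac)
    moreover have "0 \<le> (\<Sum>i\<in>UNIV. \<Sum>j\<in>UNIV. cnj (v$i) * A$i$j * v$j)" using A psd_def by blast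
    ultimately show "0 \<le> (\<Sum>i\<in>UNIV. \<Sum>j\<in>UNIV. cnj (v$i) * (r *\<^sub>R A)$i$j * v$j)"
      using r by (simp add: mult_nonneg_nonneg less_eq_complex_def)
  qed
qed
lemma psd_proj: "psd (proj v)"
  unfolding psd_def
proof
  fix x :: "complex^'a"
  define s where "s = (\<Sum>i\<in>UNIV. cnj (v$i) * x$i)"
  have "(\<Sum>i\<in>UNIV. \<Sum>j\<in>UNIV. cnj (x$i) * proj v$i$j * x$j) = cnj s * s"
    unfolding s_def proj_def by (simp add: sum_distrib_left sum_distrib_right mult_ac) (rule sum.swap)
  also have "\<dots> = of_real (Re s^2 + Im s^2)" by (simp add: complex_mult_cnj mult.commute)
  also have "0 \<le> \<dots>" unfolding less_eq_complex_def by simp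
  finally show "0 \<le> (\<Sum>i\<in>UNIV. \<Sum>j\<in>UNIV. cnj (x$i) * proj v$i$j * x$j)" .
qed

theorem mainTheorem5:
  fixes a :: real
  assumes "0 < a" and "a < 1"
  defines "ketp \<equiv> (1 / sqrt 2) *\<^sub>R (ket (0::5) + ket 1)"
      and "ketm \<equiv> (1 / sqrt 2) *\<^sub>R (ket (0::5) - ket 1)"
  defines "E \<equiv> (\<lambda>k::nat.
             if k = 1 then proj (ket (2::5)) + a *\<^sub>R proj (ket 0) + (1 - a) *\<^sub>R proj ketp
             else if k = 2 then proj (ket (3::5)) + a *\<^sub>R proj (ket 1)
             else proj (ket (4::5)) + (1 - a) *\<^sub>R proj ketm)"
  defines "Lam \<equiv> (\<lambda>A::complex^5^5.
             \<Sum>z\<in>{1,2,3::nat}. cscale (trace (A ** proj (ket (of_nat (z + 1) :: 5)))) (E z))"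
  shows "povm {1,2,3::nat} E
       \<and> E 2 ** E 3 \<noteq> E 3 ** E 2
       \<and> (\<forall>k\<in>{1,2,3::nat}. Lam (E k) = E k)
       \<and> no_contextuality_proof {({1,2,3::nat}, E)}"
proof -
  note pp = projp[folded ketp_def] projm[folded ketm_def] projk
  have psdE: "\<forall>k\<in>{1,2,3::nat}. psd (E k)"
    using assms(1,2) unfolding E_def
    by (auto intro!: psd_add psd_scaleR psd_proj)
  have sumE: "(\<Sum>k\<in>{1,2,3::nat}. E k) = mat 1"
    unfolding E_def pp
    by (simp add: vec_eq_iff forall_5 mat_def scaleR_conv_of_real)
  have nc: "E 2 ** E 3 \<noteq> E 3 ** E 2"
  proof
    assume h: "E 2 ** E 3 = E 3 ** E 2"
    have "(E 2 ** E 3)$1$0 = (E 3 ** E 2)$1$0" using h by simp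
    then show False using assms(1,2)
      unfolding E_def pp by (simp add: matrix_matrix_mult_def sum_5)
  qed
  have fixE: "\<forall>k\<in>{1,2,3::nat}. Lam (E k) = E k"
    unfolding Lam_def E_def pp
    by (simp add: vec_eq_iff forall_5 cscale_def trace_def sum_5 matrix_matrix_mult_def scaleR_conv_of_real)
  have ncp: "no_contextuality_proof {({1,2,3::nat}, E)}"
    unfolding no_contextuality_proof_def
  proof (intro exI conjI)
    show "finite {1,2,3::nat}" by simp
    show "povm {1,2,3::nat} E" unfolding povm_def using psdE sumE by simp
    show "\<forall>l\<in>{1,2,3::nat}. density (proj (ket (of_nat (l+1) :: 5)))"
      by (simp add: density_def psd_proj) (simp add: projk trace_def sum_5)
    show "\<forall>(K, A)\<in>{({1,2,3::nat}, E)}. \<forall>k\<in>K. A k = (\<Sum>l\<in>{1,2,3::nat}. cscale (trace (proj (ket (of_nat (l+1) :: 5)) ** A k)) (E l))"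
      unfolding E_def pp
      by (simp add: vec_eq_iff forall_5 cscale_def trace_def sum_5 matrix_matrix_mult_def scaleR_conv_of_real)
  qed
  show ?thesis using psdE sumE nc fixE ncp unfolding povm_def by simp
qed
end
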